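(* Let $X$ be a stacked simplicial complex of dimension $d$, and let $h,k$ be faces of $X$ whose union $h\cup k$ is not contained in any codimension one face. Then there exists a unique path between $h$ and $k$.
   Context: A simplicial complex $X$ on a finite vertex set $V$ is a family of subsets (faces) of $V$ closed under taking subsets, every element of $V$ lying in some face; facets are inclusion-maximal faces. $X$ is pure of dimension $d$ if every facet has $d+1$ elements; a codimension one face is a face with $d$ elements. $X$ is stacked if it is pure of some dimension $d$ and its facets can be ordered $F_0,F_1,\dots,F_k$ (a stacking order) such that for each $p\ge 1$, $F_p$ contains exactly one vertex $v_p$ not in $F_0\cup\dots\cup F_{p-1}$ (called the free vertex of $F_p$), and $F_p\setminus\{v_p\}\subseteq F_j$ for some $j<p$. A walk is a sequence of facets $f_1,\dots,f_p$ ($p\ge 1$) such that each $f_i\cap f_{i+1}$ has exactly $d$ elements; a path is a walk in which the faces $f_i\cap f_{i+1}$, $1\le i<p$, are pairwise distinct. For faces $h,k$ such that $h\cup k$ is not contained in any codimension one face, a path between $h$ and $k$, written $h\,|\,f_1,\dots,f_p\,|\,k$, is a path $f_1,\dots,f_p$ with $h\subseteq f_1$, $k\subseteq f_p$, and, if $p\ge 2$, $h\not\subseteq f_1\cap f_2$ and $k\not\subseteq f_p\cap f_{p-1}$. *)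

theory Defs
  imports Main
begin

definition simplicial_complex :: "'a set \<Rightarrow> 'a set set \<Rightarrow> bool" where
  "simplicial_complex V X \<longleftrightarrow> finite V \<and> (\<forall>f\<in>X. f \<subseteq> V)
     \<and> (\<forall>f\<in>X. \<forall>g. g \<subseteq> f \<longrightarrow> g \<in> X)
     \<and> (\<forall>v\<in>V. \<exists>f\<in>X. v \<in> f)"

definition facets :: "'a set set \<Rightarrow> 'a set set" where
  "facets X = {F \<in> X. \<forall>G\<in>X. F \<subseteq> G \<longrightarrow> G = F}"

definition pure :: "'a set set \<Rightarrow> nat \<Rightarrow> bool" where
  "pure X d \<longleftrightarrow> (\<forall>F\<in>facets X. card F = d + 1)"

definition stacking_order :: "'a set set \<Rightarrow> 'a set list \<Rightarrow> bool" where
  "stacking_order X Fs \<longleftrightarrow> Fs \<noteq> [] \<and> distinct Fs \<and> set Fs = facets X \<and>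
     (\<forall>p. 1 \<le> p \<and> p < length Fs \<longrightarrow>
        (\<exists>v. (Fs ! p) - (\<Union>j<p. Fs ! j) = {v} \<and>
             (\<exists>j<p. (Fs ! p) - {v} \<subseteq> Fs ! j)))"

definition stacked :: "'a set set \<Rightarrow> nat \<Rightarrow> bool" where
  "stacked X d \<longleftrightarrow> pure X d \<and> (\<exists>Fs. stacking_order X Fs)"

definition codim_one_face :: "'a set set \<Rightarrow> nat \<Rightarrow> 'a set \<Rightarrow> bool" where
  "codim_one_face X d c \<longleftrightarrow> c \<in> X \<and> card c = d"

definition walk :: "'a set set \<Rightarrow> nat \<Rightarrow> 'a set list \<Rightarrow> bool" where
  "walk X d fs \<longleftrightarrow> fs \<noteq> [] \<and> set fs \<subseteq> facets X \<and>
     (\<forall>i. i + 1 < length fs \<longrightarrow> card (fs ! i \<inter> fs ! (i + 1)) = d)"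

definition path :: "'a set set \<Rightarrow> nat \<Rightarrow> 'a set list \<Rightarrow> bool" where
  "path X d fs \<longleftrightarrow> walk X d fs \<and>
     distinct (map (\<lambda>i. fs ! i \<inter> fs ! (i + 1)) [0..<length fs - 1])"

definition path_between :: "'a set set \<Rightarrow> nat \<Rightarrow> 'a set \<Rightarrow> 'a set \<Rightarrow> 'a set list \<Rightarrow> bool" where
  "path_between X d h k fs \<longleftrightarrow> path X d fs \<and> h \<subseteq> hd fs \<and> k \<subseteq> last fs \<and>
     (2 \<le> length fs \<longrightarrow>
        \<not> h \<subseteq> fs ! 0 \<inter> fs ! 1 \<and>
        \<not> k \<subseteq> fs ! (length fs - 1) \<inter> fs ! (length fs - 2))"

end

theory Submission
  imports Defs
begin
fun ridges :: "'a set list \<Rightarrow> 'a set list" where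
  "ridges (a # b # xs) = (a \<inter> b) # ridges (b # xs)"
| "ridges _ = []"

lemma ridges_Cons: "ridges (a # xs) = (if xs = [] then [] else (a \<inter> hd xs) # ridges xs)"
  by (cases xs) auto

lemma ridges_append: "ridges (xs @ ys) = ridges xs @ (if xs = [] \<or> ys = [] then [] else [last xs \<inter> hd ys]) @ ridges ys"
  by (induction xs rule: ridges.induct) (auto simp: ridges_Cons)

lemma ridges_rev: "ridges (rev xs) = rev (ridges xs)"
  by (induction xs) (auto simp: ridges_append ridges_Cons last_rev hd_rev Int_commute)

lemma ridges_map: "ridges xs = map (\<lambda>i. xs!i \<inter> xs!(i+1)) [0..<length xs - 1]"
  by (induction xs rule: ridges.induct) (auto simp: upt_conv_Cons map_Suc_upt[symmetric] simp del: upt_Suc)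

lemma set_ridges: "r \<in> set (ridges xs) \<Longrightarrow> \<exists>a\<in>set xs. \<exists>b\<in>set xs. r = a \<inter> b"
  by (induction xs rule: ridges.induct) auto

lemma ridges_ne: "ridges xs \<noteq> [] \<longleftrightarrow> 2 \<le> length xs"
  by (induction xs rule: ridges.induct) auto

definition pth :: "nat \<Rightarrow> 'a set set \<Rightarrow> 'a set list \<Rightarrow> bool" where
  "pth d S xs \<longleftrightarrow> xs \<noteq> [] \<and> set xs \<subseteq> S \<and> (\<forall>r\<in>set (ridges xs). card r = d) \<and> distinct (ridges xs)"

definition pb :: "nat \<Rightarrow> 'a set set \<Rightarrow> 'a set \<Rightarrow> 'a set \<Rightarrow> 'a set list \<Rightarrow> bool" where
  "pb d S h k xs \<longleftrightarrow> pth d S xs \<and> h \<subseteq> hd xs \<and> k \<subseteq> last xs \<and>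
     (ridges xs \<noteq> [] \<longrightarrow> \<not> h \<subseteq> hd (ridges xs) \<and> \<not> k \<subseteq> last (ridges xs))"

lemma pth_rev: "pth d S (rev xs) \<longleftrightarrow> pth d S xs"
  by (simp add: pth_def ridges_rev)

lemma pb_rev: "pb d S h k xs \<longleftrightarrow> pb d S k h (rev xs)"
  unfolding pb_def pth_rev ridges_rev
  by (auto simp: pth_def hd_rev last_rev)

lemma ex1_rev: "(\<exists>!xs. pb d S h k xs) \<longleftrightarrow> (\<exists>!xs. pb d S k h xs)"
proof -
  have "\<And>h k. (\<exists>!xs. pb d S h k xs) \<Longrightarrow> (\<exists>!xs. pb d S k h xs)"
  proof -
    fix h k assume "\<exists>!xs. pb d S h k xs"
    then obtain xs where xs: "pb d S h k xs" and u: "\<And>ys. pb d S h k ys \<Longrightarrow> ys = xs" by blast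
    show "\<exists>!xs. pb d S k h xs"
    proof (rule ex1I[of _ "rev xs"])
      show "pb d S k h (rev xs)" using xs pb_rev by metis
      fix ys assume "pb d S k h ys"
      then have "pb d S h k (rev ys)" using pb_rev by (metis rev_rev_ident)
      then have "rev ys = xs" by (rule u)
      then show "ys = rev xs" by auto
    qed
  qed
  then show ?thesis by blast
qed

lemma pth_mono: "pth d S xs \<Longrightarrow> S \<subseteq> T \<Longrightarrow> pth d T xs"
  by (auto simp: pth_def)

lemma pth_tl: "pth d S (a # ys) \<Longrightarrow> ys \<noteq> [] \<Longrightarrow> pth d S ys"
  by (auto simp: pth_def ridges_Cons)

lemma pth_take: "pth d S xs \<Longrightarrow> 0 < m \<Longrightarrow> pth d S (take m xs)"
proof -
  assume a: "pth d S xs" "0 < m"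
  have e: "ridges xs = ridges (take m xs) @ (if take m xs = [] \<or> drop m xs = [] then [] else [last (take m xs) \<inter> hd (drop m xs)]) @ ridges (drop m xs)"
    using ridges_append[of "take m xs" "drop m xs"] by simp
  have "take m xs \<noteq> []" using a by (auto simp: pth_def)
  moreover have "set (take m xs) \<subseteq> set xs" by (rule set_take_subset)
  ultimately show ?thesis using a e unfolding pth_def
    by (metis (no_types, lifting) Un_iff distinct_append set_append subset_trans)
qed

definition face :: "'a set set \<Rightarrow> 'a set \<Rightarrow> bool" where
  "face S h \<longleftrightarrow> (\<exists>g\<in>S. h \<subseteq> g)"

definition ridge :: "nat \<Rightarrow> 'a set set \<Rightarrow> 'a set \<Rightarrow> bool" where
  "ridge d S c \<longleftrightarrow> card c = d \<and> (\<exists>g\<in>S. c \<subseteq> g)"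


locale stp =
  fixes d :: nat and S' :: "'a set set" and F :: "'a set" and v :: 'a and G :: "'a set"
  assumes cardF: "card F = Suc d" and vF: "v \<in> F" and vS': "\<And>g. g \<in> S' \<Longrightarrow> v \<notin> g"
    and GS': "G \<in> S'" and FG: "F - {v} \<subseteq> G" and cardS': "\<And>g. g \<in> S' \<Longrightarrow> card g = Suc d"
begin

definition r0 where "r0 = F - {v}"

lemma finF: "finite F" using cardF card.infinite by fastforce
lemma fin_S': "g \<in> S' \<Longrightarrow> finite g" using cardS' card.infinite by fastforce
lemma card_r0: "card r0 = d" using finF vF cardF by (simp add: r0_def)
lemma fin_r0: "finite r0" using finF by (simp add: r0_def)
lemma FnS': "F \<notin> S'" using vS' vF by blast
lemma r0G: "r0 \<subseteq> G" using FG by (simp add: r0_def)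
lemma r0F: "r0 \<subseteq> F" by (auto simp: r0_def)
lemma v_r0: "v \<notin> r0" by (auto simp: r0_def)

lemma nbr:
  assumes "a \<in> insert F S'" "card (a \<inter> F) = d"
  shows "a \<in> S' \<and> a \<inter> F = r0 \<and> F \<inter> a = r0"
proof -
  have "a \<noteq> F" using assms cardF by auto
  then have a: "a \<in> S'" using assms by auto
  then have "a \<inter> F \<subseteq> r0" using vS' by (auto simp: r0_def)
  then have "a \<inter> F = r0" using card_subset_eq[OF fin_r0] assms card_r0 by metis
  then show ?thesis using a by auto
qed

lemma ridge_card: "pth d S xs \<Longrightarrow> r \<in> set (ridges xs) \<Longrightarrow> card r = d"
  by (auto simp: pth_def)

lemma interior:
  assumes "pth d (insert F S') (as @ F # bs)"
  shows "as = [] \<or> bs = []"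
proof (rule ccontr)
  assume "\<not> (as = [] \<or> bs = [])"
  then have ne: "as \<noteq> []" "bs \<noteq> []" by auto
  have e: "ridges (as @ F # bs) = ridges as @ [last as \<inter> F] @ (F \<inter> hd bs) # ridges bs"
    using ne by (simp add: ridges_append ridges_Cons)
  have "last as \<in> set (as @ F # bs)" using ne by simp
  then have "last as \<in> insert F S'" using assms unfolding pth_def by blast
  moreover have "card (last as \<inter> F) = d" using assms e by (auto simp: pth_def)
  ultimately have 1: "last as \<inter> F = r0" using nbr by blast
  have "hd bs \<in> set (as @ F # bs)" using ne by simp
  then have "hd bs \<in> insert F S'" using assms unfolding pth_def by blast
  moreover have "card (hd bs \<inter> F) = d" using assms e by (auto simp: pth_def Int_commute)
  ultimately have 2: "F \<inter> hd bs = r0" using nbr by blast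
  show False using assms e 1 2 by (auto simp: pth_def)
qed

lemma bothends:
  assumes "pth d (insert F S') (F # cs @ [F])"
  shows False
proof (cases "cs = []")
  case True
  then show ?thesis using assms cardF by (auto simp: pth_def)
next
  case False
  have e: "ridges (F # cs @ [F]) = (F \<inter> hd cs) # ridges cs @ [last cs \<inter> F]"
    using False by (simp add: ridges_append ridges_Cons)
  have "last cs \<in> set (F # cs @ [F])" using False by simp
  then have "last cs \<in> insert F S'" using assms unfolding pth_def by blast
  moreover have "card (last cs \<inter> F) = d" using assms e by (auto simp: pth_def)
  ultimately have 1: "last cs \<inter> F = r0" using nbr by blast
  have "hd cs \<in> set (F # cs @ [F])" using False by simp
  then have "hd cs \<in> insert F S'" using assms unfolding pth_def by blast
  moreover have "card (hd cs \<inter> F) = d" using assms e by (auto simp: pth_def Int_commute)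
  ultimately have 2: "F \<inter> hd cs = r0" using nbr by blast
  show False using assms e 1 2 by (auto simp: pth_def)
qed

lemma Fpos:
  assumes "pth d (insert F S') xs" "F \<in> set xs"
  shows "xs = [F] \<or> (\<exists>ys. xs = F # ys \<and> ys \<noteq> [] \<and> F \<notin> set ys) \<or> (\<exists>ys. xs = ys @ [F] \<and> ys \<noteq> [] \<and> F \<notin> set ys)"
proof -
  obtain as bs where xs: "xs = as @ F # bs" using assms(2) split_list by metis
  show ?thesis
  proof (cases "as = []")
    case True
    have "F \<notin> set bs"
    proof
      assume "F \<in> set bs"
      then obtain cs ds where "bs = cs @ F # ds" using split_list by metis
      then have p: "pth d (insert F S') ((F # cs) @ F # ds)" using assms xs True by simp
      then have "ds = []" using interior by blast
      then show False using p bothends by simp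
    qed
    then show ?thesis using xs True by (cases bs) auto
  next
    case False
    then have bs: "bs = []" using interior assms xs by blast
    have "F \<notin> set as"
    proof
      assume "F \<in> set as"
      then obtain cs ds where "as = cs @ F # ds" using split_list by metis
      then have p: "pth d (insert F S') (cs @ F # (ds @ [F]))" using assms xs bs by simp
      then have "cs = []" using interior by blast
      then show False using p bothends by simp
    qed
    then show ?thesis using xs bs False by auto
  qed
qed

lemma face_F: "face (insert F S') h \<Longrightarrow> v \<in> h \<Longrightarrow> h \<subseteq> F"
  using vS' by (auto simp: face_def)

lemma start_F:
  assumes "pb d (insert F S') h k (F # ys)" "ys \<noteq> []" "v \<notin> h"
  shows False
proof -
  have "hd ys \<in> set (F # ys)" using assms by simp
  then have "hd ys \<in> insert F S'" using assms unfolding pb_def pth_def by blast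
  moreover have "card (hd ys \<inter> F) = d" using assms by (auto simp: pb_def pth_def ridges_Cons Int_commute)
  ultimately have "F \<inter> hd ys = r0" using nbr by blast
  moreover have "h \<subseteq> r0" using assms by (auto simp: pb_def r0_def)
  ultimately show False using assms by (auto simp: pb_def ridges_Cons)
qed


lemma pth_S': "pth d (insert F S') xs \<Longrightarrow> F \<notin> set xs \<Longrightarrow> pth d S' xs"
  by (auto simp: pth_def)

lemma hd_nbr:
  assumes "pth d (insert F S') (F # ys)" "ys \<noteq> []"
  shows "F \<inter> hd ys = r0"
proof -
  have "hd ys \<in> set (F # ys)" using assms by simp
  then have "hd ys \<in> insert F S'" using assms unfolding pth_def by blast
  moreover have "card (hd ys \<inter> F) = d" using assms by (auto simp: pth_def ridges_Cons Int_commute)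
  ultimately show ?thesis using nbr by blast
qed

lemma L_hd:
  assumes IHL: "\<And>xs x. pth d S' xs \<Longrightarrow> x \<in> set xs \<Longrightarrow> hd xs \<inter> last xs \<subseteq> x"
    and p: "pth d (insert F S') (F # ys)" and n: "F \<notin> set ys" and x: "x \<in> set (F # ys)"
  shows "F \<inter> last (F # ys) \<subseteq> x"
proof (cases "ys = []")
  case True then show ?thesis using x by auto
next
  case False
  have pys: "pth d S' ys" using pth_tl[OF p False] n pth_S' by blast
  have 1: "F \<inter> hd ys = r0" using hd_nbr p False by blast
  have "last ys \<in> S'" using pys False unfolding pth_def by auto
  then have "F \<inter> last ys \<subseteq> r0" using vS' by (auto simp: r0_def)
  then have 2: "F \<inter> last ys \<subseteq> hd ys \<inter> last ys" using 1 by auto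
  show ?thesis
  proof (cases "x = F")
    case True then show ?thesis by auto
  next
    case False
    then have "x \<in> set ys" using x by auto
    then show ?thesis using IHL[OF pys] 2 \<open>ys \<noteq> []\<close> by auto
  qed
qed

lemma L_step:
  assumes IHL: "\<And>xs x. pth d S' xs \<Longrightarrow> x \<in> set xs \<Longrightarrow> hd xs \<inter> last xs \<subseteq> x"
    and p: "pth d (insert F S') xs" and x: "x \<in> set xs"
  shows "hd xs \<inter> last xs \<subseteq> x"
proof (cases "F \<in> set xs")
  case False
  then show ?thesis using IHL pth_S' p x by blast
next
  case True
  from Fpos[OF p True] show ?thesis
  proof (elim disjE exE conjE)
    assume "xs = [F]" then show ?thesis using x by auto
  next
    fix ys assume e: "xs = F # ys" "ys \<noteq> []" "F \<notin> set ys"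
    have "F \<inter> last (F # ys) \<subseteq> x" using L_hd[OF IHL, of ys x] p x e by simp
    then show ?thesis using e by simp
  next
    fix ys assume e: "xs = ys @ [F]" "ys \<noteq> []" "F \<notin> set ys"
    have "pth d (insert F S') (F # rev ys)" using p e pth_rev by (metis rev.simps(2) rev_rev_ident)
    moreover have "x \<in> set (F # rev ys)" using x e by auto
    ultimately have "F \<inter> last (F # rev ys) \<subseteq> x" using L_hd[OF IHL, of "rev ys" x] e by simp
    then show ?thesis using e by (auto simp: last_rev hd_rev)
  qed
qed


lemma hd_v: "pb d (insert F S') h k xs \<Longrightarrow> v \<in> h \<Longrightarrow> hd xs = F"
proof -
  assume a: "pb d (insert F S') h k xs" "v \<in> h"
  then have "xs \<noteq> []" "set xs \<subseteq> insert F S'" "h \<subseteq> hd xs" by (auto simp: pb_def pth_def)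
  then have "hd xs \<in> insert F S'" "v \<in> hd xs" using a by (meson list.set_sel(1) subsetD)+
  then show ?thesis using vS' by (metis insertE)
qed

lemma hd_form:
  assumes "pth d (insert F S') xs" "hd xs = F"
  shows "xs = [F] \<or> (\<exists>ys. xs = F # ys \<and> ys \<noteq> [] \<and> F \<notin> set ys)"
proof -
  have "F \<in> set xs" using assms by (auto simp: pth_def)
  from Fpos[OF assms(1) this] show ?thesis
  proof (elim disjE exE conjE)
    fix ys assume "xs = ys @ [F]" "ys \<noteq> []" "F \<notin> set ys"
    then have "hd ys = F" using assms by simp
    then show ?thesis using \<open>ys \<noteq> []\<close> \<open>F \<notin> set ys\<close> by (metis list.set_sel(1))
  qed auto
qed

lemma pb_single: "h \<subseteq> F \<Longrightarrow> k \<subseteq> F \<Longrightarrow> pb d (insert F S') h k [F]"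
  by (simp add: pb_def pth_def)

lemma caseC1:
  assumes IHL: "\<And>xs x. pth d S' xs \<Longrightarrow> x \<in> set xs \<Longrightarrow> hd xs \<inter> last xs \<subseteq> x"
    and fh: "face (insert F S') h" and vh: "v \<in> h" and kr: "k \<subseteq> r0"
  shows "\<exists>!xs. pb d (insert F S') h k xs"
proof (rule ex1I[of _ "[F]"])
  show "pb d (insert F S') h k [F]" using pb_single face_F[OF fh vh] kr r0F by blast
  fix xs assume pb: "pb d (insert F S') h k xs"
  then have p: "pth d (insert F S') xs" by (simp add: pb_def)
  have "hd xs = F" using hd_v pb vh by blast
  from hd_form[OF p this] show "xs = [F]"
  proof (elim disjE exE conjE)
    fix ys assume e: "xs = F # ys" "ys \<noteq> []" "F \<notin> set ys"
    have pys: "pth d S' ys" using pth_tl[of d _ F ys] p e pth_S' by blast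
    have "F \<inter> hd ys = r0" using hd_nbr p e by blast
    then have "k \<subseteq> hd ys" using kr by auto
    moreover have "k \<subseteq> last ys" using pb e by (simp add: pb_def)
    ultimately have "\<forall>x\<in>set ys. k \<subseteq> x" using IHL[OF pys] by blast
    moreover have "k \<subseteq> F" using kr r0F by blast
    ultimately have all: "\<forall>x\<in>set xs. k \<subseteq> x" using e by auto
    have rn: "ridges xs \<noteq> []" using e by (simp add: ridges_Cons)
    then have "last (ridges xs) \<in> set (ridges xs)" by simp
    then obtain a b where "a \<in> set xs" "b \<in> set xs" "last (ridges xs) = a \<inter> b" using set_ridges by blast
    then have "k \<subseteq> last (ridges xs)" using all by auto
    then show ?thesis using pb rn by (simp add: pb_def)
  qed
qed

lemma cons_pb:
  assumes IHL: "\<And>xs x. pth d S' xs \<Longrightarrow> x \<in> set xs \<Longrightarrow> hd xs \<inter> last xs \<subseteq> x"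
    and pb: "pb d S' r0 k ys" and kr: "\<not> k \<subseteq> r0" and hF: "h \<subseteq> F" and vh: "v \<in> h"
  shows "pb d (insert F S') h k (F # ys)"
proof -
  have pys: "pth d S' ys" using pb by (simp add: pb_def)
  then have ne: "ys \<noteq> []" by (simp add: pth_def)
  have "hd ys \<in> S'" using pys ne by (auto simp: pth_def)
  then have "F \<inter> hd ys \<subseteq> r0" using vS' by (auto simp: r0_def)
  moreover have "r0 \<subseteq> hd ys" using pb by (simp add: pb_def)
  ultimately have fh: "F \<inter> hd ys = r0" using r0F by auto
  have rr: "ridges (F # ys) = r0 # ridges ys" using ne fh by (simp add: ridges_Cons)
  have nin: "r0 \<notin> set (ridges ys)"
  proof
    assume "r0 \<in> set (ridges ys)"
    then obtain i where i: "i < length ys - 1" "ys ! i \<inter> ys ! (i+1) = r0"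
      unfolding ridges_map by auto
    define zs where "zs = take (i+2) ys"
    have pz: "pth d S' zs" unfolding zs_def using pth_take[OF pys] by simp
    have "hd zs = ys ! 0" using ne by (simp add: zs_def hd_conv_nth)
    moreover have "last zs = ys ! (i+1)"
    proof -
      have lz: "length zs = i+2" using i by (simp add: zs_def)
      then have "last zs = zs ! (i+1)" by (subst last_conv_nth) auto
      also have "\<dots> = ys ! (i+1)" by (simp add: zs_def)
      finally show ?thesis .
    qed
    moreover have "ys ! 1 \<in> set zs" using i unfolding zs_def in_set_conv_nth
      by (rule_tac x=1 in exI) auto
    ultimately have "ys ! 0 \<inter> ys ! (i+1) \<subseteq> ys ! 1" using IHL[OF pz] by metis
    moreover have "r0 \<subseteq> ys ! 0" using pb ne by (simp add: pb_def hd_conv_nth)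
    ultimately have "r0 \<subseteq> ys ! 0 \<inter> ys ! 1" using i by auto
    moreover have "Suc (Suc 0) \<le> length ys" using i by simp
    then obtain a b zs' where ys: "ys = a # b # zs'" by (metis Suc_le_length_iff)
    ultimately have "r0 \<subseteq> hd (ridges ys)" by simp
    moreover have "ridges ys \<noteq> []" using ys by simp
    ultimately show False using pb by (simp add: pb_def)
  qed
  have p: "pth d (insert F S') (F # ys)" using pys rr nin card_r0 by (auto simp: pth_def)
  show ?thesis unfolding pb_def
  proof (intro conjI impI)
    show "pth d (insert F S') (F # ys)" by (fact p)
    show "h \<subseteq> hd (F # ys)" using hF by simp
    show "k \<subseteq> last (F # ys)" using pb ne by (simp add: pb_def)
    show "\<not> h \<subseteq> hd (ridges (F # ys))" using rr vh v_r0 by auto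
    show "\<not> k \<subseteq> last (ridges (F # ys))"
    proof (cases "ridges ys = []")
      case True then show ?thesis using rr kr by simp
    next
      case False then show ?thesis using rr pb by (simp add: pb_def)
    qed
  qed
qed

lemma uncons_pb:
  assumes pb: "pb d (insert F S') h k xs" and vh: "v \<in> h" and kr: "\<not> k \<subseteq> r0" and vk: "v \<notin> k"
  shows "\<exists>ys. xs = F # ys \<and> pb d S' r0 k ys"
proof -
  have p: "pth d (insert F S') xs" using pb by (simp add: pb_def)
  have "hd xs = F" using hd_v pb vh by blast
  from hd_form[OF p this] show ?thesis
  proof (elim disjE exE conjE)
    assume "xs = [F]"
    then have "k \<subseteq> F" using pb by (simp add: pb_def)
    then have "k \<subseteq> r0" using vk by (auto simp: r0_def)
    then show ?thesis using kr by blast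
  next
    fix ys assume e: "xs = F # ys" "ys \<noteq> []" "F \<notin> set ys"
    have pys: "pth d S' ys" using pth_tl[of d _ F ys] p e pth_S' by blast
    have fh: "F \<inter> hd ys = r0" using hd_nbr p e by blast
    have rr: "ridges xs = r0 # ridges ys" using e fh by (simp add: ridges_Cons)
    have "pb d S' r0 k ys" unfolding pb_def
    proof (intro conjI impI)
      show "pth d S' ys" by (fact pys)
      show "r0 \<subseteq> hd ys" using fh by auto
      show "k \<subseteq> last ys" using pb e by (simp add: pb_def)
      assume rn: "ridges ys \<noteq> []"
      show "\<not> k \<subseteq> last (ridges ys)" using pb rr rn by (simp add: pb_def)
      show "\<not> r0 \<subseteq> hd (ridges ys)"
      proof
        assume sub: "r0 \<subseteq> hd (ridges ys)"
        have hin: "hd (ridges ys) \<in> set (ridges ys)" using rn by simp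
        then obtain a b where ab: "a \<in> set ys" "b \<in> set ys" "hd (ridges ys) = a \<inter> b" using set_ridges by blast
        have "a \<in> S'" using ab pys by (auto simp: pth_def)
        then have "finite (hd (ridges ys))" using ab fin_S' by auto
        moreover have "card (hd (ridges ys)) = d" using hin pys by (auto simp: pth_def)
        ultimately have "r0 = hd (ridges ys)" using card_subset_eq sub card_r0 by metis
        then have "r0 \<in> set (ridges ys)" using hin by simp
        then show False using p rr by (simp add: pth_def)
      qed
    qed
    then show ?thesis using e by blast
  qed
qed


lemma pb_mono: "pb d S' h k xs \<Longrightarrow> pb d (insert F S') h k xs"
  unfolding pb_def using pth_mono by blast

lemma face_S': "face (insert F S') h \<Longrightarrow> v \<notin> h \<Longrightarrow> face S' h"
  unfolding face_def using r0G GS' by (auto simp: r0_def)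

lemma ridge_mono: "ridge d S' c \<Longrightarrow> ridge d (insert F S') c"
  unfolding ridge_def by auto

lemma caseA:
  assumes IHM: "\<And>h k. face S' h \<Longrightarrow> face S' k \<Longrightarrow> \<not> (\<exists>c. ridge d S' c \<and> h \<union> k \<subseteq> c) \<Longrightarrow> \<exists>!xs. pb d S' h k xs"
    and fh: "face (insert F S') h" and fk: "face (insert F S') k"
    and nc: "\<not> (\<exists>c. ridge d (insert F S') c \<and> h \<union> k \<subseteq> c)" and vh: "v \<notin> h" and vk: "v \<notin> k"
  shows "\<exists>!xs. pb d (insert F S') h k xs"
proof -
  have eq: "pb d (insert F S') h k xs \<longleftrightarrow> pb d S' h k xs" for xs
  proof
    assume pb: "pb d (insert F S') h k xs"
    then have p: "pth d (insert F S') xs" by (simp add: pb_def)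
    have "F \<notin> set xs"
    proof
      assume "F \<in> set xs"
      from Fpos[OF p this] show False
      proof (elim disjE exE conjE)
        assume "xs = [F]"
        then have "h \<union> k \<subseteq> F" using pb by (simp add: pb_def)
        then have "h \<union> k \<subseteq> r0" using vh vk by (auto simp: r0_def)
        moreover have "ridge d (insert F S') r0" using card_r0 r0F by (auto simp: ridge_def)
        ultimately show False using nc by blast
      next
        fix ys assume "xs = F # ys" "ys \<noteq> []" "F \<notin> set ys"
        then show False using start_F pb vh by blast
      next
        fix ys assume e: "xs = ys @ [F]" "ys \<noteq> []" "F \<notin> set ys"
        have "pb d (insert F S') k h (F # rev ys)" using pb e pb_rev by (metis rev.simps(2) rev_rev_ident)
        moreover have "rev ys \<noteq> []" using e by simp
        ultimately show False using start_F vk by blast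
      qed
    qed
    then show "pb d S' h k xs" using pb pth_S' by (simp add: pb_def)
  qed (rule pb_mono)
  have f1: "face S' h" using face_S' fh vh by blast
  have f2: "face S' k" using face_S' fk vk by blast
  have "\<not> (\<exists>c. ridge d S' c \<and> h \<union> k \<subseteq> c)" using nc ridge_mono by blast
  then have "\<exists>!xs. pb d S' h k xs" using IHM f1 f2 by blast
  then show ?thesis using eq by simp
qed

lemma caseB:
  assumes fh: "face (insert F S') h" and fk: "face (insert F S') k" and vh: "v \<in> h" and vk: "v \<in> k"
  shows "\<exists>!xs. pb d (insert F S') h k xs"
proof (rule ex1I[of _ "[F]"])
  show "pb d (insert F S') h k [F]" using pb_single face_F fh fk vh vk by blast
  fix xs assume pb: "pb d (insert F S') h k xs"
  then have p: "pth d (insert F S') xs" by (simp add: pb_def)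
  have "hd xs = F" using hd_v pb vh by blast
  from hd_form[OF p this] show "xs = [F]"
  proof (elim disjE exE conjE)
    fix ys assume e: "xs = F # ys" "ys \<noteq> []" "F \<notin> set ys"
    have "pb d (insert F S') k h (rev xs)" using pb pb_rev by blast
    then have "hd (rev xs) = F" using hd_v vk by blast
    then have "last ys = F" using e by (simp add: hd_rev)
    then show ?thesis using e by (metis last_in_set)
  qed
qed

lemma caseC:
  assumes IHL: "\<And>xs x. pth d S' xs \<Longrightarrow> x \<in> set xs \<Longrightarrow> hd xs \<inter> last xs \<subseteq> x"
    and IHM: "\<And>h k. face S' h \<Longrightarrow> face S' k \<Longrightarrow> \<not> (\<exists>c. ridge d S' c \<and> h \<union> k \<subseteq> c) \<Longrightarrow> \<exists>!xs. pb d S' h k xs"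
    and fh: "face (insert F S') h" and fk: "face (insert F S') k"
    and vh: "v \<in> h" and vk: "v \<notin> k"
  shows "\<exists>!xs. pb d (insert F S') h k xs"
proof (cases "k \<subseteq> r0")
  case True
  then show ?thesis using caseC1[OF IHL fh vh] by blast
next
  case False
  have hF: "h \<subseteq> F" using face_F fh vh by blast
  have f1: "face S' r0" using r0G GS' by (auto simp: face_def)
  have f2: "face S' k" using face_S' fk vk by blast
  have nc: "\<not> (\<exists>c. ridge d S' c \<and> r0 \<union> k \<subseteq> c)"
  proof
    assume "\<exists>c. ridge d S' c \<and> r0 \<union> k \<subseteq> c"
    then obtain c g where c: "card c = d" "g \<in> S'" "c \<subseteq> g" "r0 \<union> k \<subseteq> c" by (auto simp: ridge_def)
    then have "finite c" using fin_S' finite_subset by blast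
    then have "r0 = c" using c card_r0 card_subset_eq by (metis Un_subset_iff)
    then show False using c False by auto
  qed
  obtain ys0 where y0: "pb d S' r0 k ys0" and u: "\<And>ys. pb d S' r0 k ys \<Longrightarrow> ys = ys0"
    using IHM[OF f1 f2 nc] by blast
  show ?thesis
  proof (rule ex1I[of _ "F # ys0"])
    show "pb d (insert F S') h k (F # ys0)" using cons_pb[OF IHL y0 False hF vh] .
    fix xs assume "pb d (insert F S') h k xs"
    then obtain ys where "xs = F # ys" "pb d S' r0 k ys" using uncons_pb vh vk False by blast
    then show "xs = F # ys0" using u by simp
  qed
qed

lemma main_step:
  assumes IHL: "\<And>xs x. pth d S' xs \<Longrightarrow> x \<in> set xs \<Longrightarrow> hd xs \<inter> last xs \<subseteq> x"
    and IHM: "\<And>h k. face S' h \<Longrightarrow> face S' k \<Longrightarrow> \<not> (\<exists>c. ridge d S' c \<and> h \<union> k \<subseteq> c) \<Longrightarrow> \<exists>!xs. pb d S' h k xs"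
    and fh: "face (insert F S') h" and fk: "face (insert F S') k"
    and nc: "\<not> (\<exists>c. ridge d (insert F S') c \<and> h \<union> k \<subseteq> c)"
  shows "\<exists>!xs. pb d (insert F S') h k xs"
proof (cases "v \<in> h")
  case True
  then show ?thesis
  proof (cases "v \<in> k")
    case True show ?thesis by (rule caseB[OF fh fk \<open>v \<in> h\<close> True])
  next
    case False show ?thesis by (rule caseC[OF IHL IHM fh fk True False])
  qed
next
  case False
  then show ?thesis
  proof (cases "v \<in> k")
    case True
    then have "\<exists>!xs. pb d (insert F S') k h xs" using caseC[OF IHL IHM fk fh True False] by blast
    then show ?thesis by (rule iffD2[OF ex1_rev[of d "insert F S'" h k]])
  next
    case vk: False show ?thesis by (rule caseA[OF IHM fh fk nc False vk])
  qed
qed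

end

inductive stk :: "nat \<Rightarrow> 'a set list \<Rightarrow> bool" where
  one: "card F = Suc d \<Longrightarrow> stk d [F]"
| snoc: "stk d Fs \<Longrightarrow> card F = Suc d \<Longrightarrow> v \<in> F \<Longrightarrow> v \<notin> \<Union>(set Fs) \<Longrightarrow> G \<in> set Fs
     \<Longrightarrow> F - {v} \<subseteq> G \<Longrightarrow> stk d (Fs @ [F])"

lemma stk_card: "stk d Fs \<Longrightarrow> g \<in> set Fs \<Longrightarrow> card g = Suc d"
  by (induction rule: stk.induct) auto

lemma stk_stp: "stk d Fs \<Longrightarrow> card F = Suc d \<Longrightarrow> v \<in> F \<Longrightarrow> v \<notin> \<Union>(set Fs) \<Longrightarrow> G \<in> set Fs
     \<Longrightarrow> F - {v} \<subseteq> G \<Longrightarrow> stp d (set Fs) F v G"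
  unfolding stp_def using stk_card by blast

lemma stk_L: "stk d Fs \<Longrightarrow> pth d (set Fs) xs \<Longrightarrow> x \<in> set xs \<Longrightarrow> hd xs \<inter> last xs \<subseteq> x"
proof (induction arbitrary: xs x rule: stk.induct)
  case (one F d)
  then have "set xs \<subseteq> {F}" "xs \<noteq> []" by (auto simp: pth_def)
  then have all: "\<forall>y\<in>set xs. y = F" by auto
  then have "hd xs = F" "last xs = F" "x = F" using one \<open>xs \<noteq> []\<close> by (metis hd_in_set, metis last_in_set, blast)
  then show ?case by auto
next
  case (snoc d Fs F v G)
  interpret stp d "set Fs" F v G by (rule stk_stp[OF snoc.hyps])
  have e: "set (Fs @ [F]) = insert F (set Fs)" by simp
  have "hd xs \<inter> last xs \<subseteq> x"
    apply (rule L_step[OF snoc.IH])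
    using snoc.prems unfolding e apply -
     apply assumption+
    done
  then show ?case .
qed

lemma stk_main: "stk d Fs \<Longrightarrow> face (set Fs) h \<Longrightarrow> face (set Fs) k \<Longrightarrow> \<not> (\<exists>c. ridge d (set Fs) c \<and> h \<union> k \<subseteq> c)
   \<Longrightarrow> \<exists>!xs. pb d (set Fs) h k xs"
proof (induction arbitrary: h k rule: stk.induct)
  case (one F d)
  show ?case
  proof (rule ex1I[of _ "[F]"])
    show "pb d (set [F]) h k [F]" using one by (auto simp: pb_def pth_def face_def)
    fix xs assume pb: "pb d (set [F]) h k xs"
    then have s: "set xs \<subseteq> {F}" "xs \<noteq> []" by (auto simp: pb_def pth_def)
    show "xs = [F]"
    proof (cases xs)
      case Nil then show ?thesis using s by simp
    next
      case (Cons a ys)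
      show ?thesis
      proof (cases ys)
        case Nil then show ?thesis using Cons s by auto
      next
        case (Cons b zs)
        then have "a = F" "b = F" using s \<open>xs = a # ys\<close> by auto
        then have "card (a \<inter> b) = d" using pb Cons \<open>xs = a # ys\<close> by (auto simp: pb_def pth_def)
        then show ?thesis using \<open>a = F\<close> \<open>b = F\<close> one by simp
      qed
    qed
  qed
next
  case (snoc d Fs F v G)
  interpret stp d "set Fs" F v G by (rule stk_stp[OF snoc.hyps])
  have IHL: "\<And>xs x. pth d (set Fs) xs \<Longrightarrow> x \<in> set xs \<Longrightarrow> hd xs \<inter> last xs \<subseteq> x"
    using stk_L[OF snoc.hyps(1)] by blast
  have e: "set (Fs @ [F]) = insert F (set Fs)" by simp
  note m = main_step[OF IHL snoc.IH]
  have "\<exists>!xs. pb d (insert F (set Fs)) h k xs"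
    apply (rule m)
    using snoc.prems unfolding e apply -
      apply assumption+
    done
  then show ?case unfolding e .
qed

lemma pb_eq: "path_between X d h k fs \<longleftrightarrow> pb d (facets X) h k fs"
proof -
  have w: "walk X d fs \<longleftrightarrow> fs \<noteq> [] \<and> set fs \<subseteq> facets X \<and> (\<forall>r\<in>set (ridges fs). card r = d)"
    unfolding walk_def ridges_map by auto
  have p: "path X d fs \<longleftrightarrow> pth d (facets X) fs"
    unfolding path_def w pth_def ridges_map by simp
  have r: "ridges fs \<noteq> [] \<longleftrightarrow> 2 \<le> length fs" by (rule ridges_ne)
  have hl: "2 \<le> length fs \<Longrightarrow> hd (ridges fs) = fs ! 0 \<inter> fs ! 1 \<and>
       last (ridges fs) = fs ! (length fs - 1) \<inter> fs ! (length fs - 2)"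
  proof -
    assume "2 \<le> length fs"
    then obtain n where n: "length fs = Suc (Suc n)" by (metis add_2_eq_Suc le_Suc_ex)
    have "hd (ridges fs) = fs ! 0 \<inter> fs ! 1" unfolding ridges_map using n by (simp add: upt_conv_Cons del: upt_Suc)
    moreover have "last (ridges fs) = fs ! (length fs - 1) \<inter> fs ! (length fs - 2)" unfolding ridges_map using n by (simp add: Int_commute)
    ultimately show ?thesis by simp
  qed
  show ?thesis unfolding path_between_def pb_def p
    by (cases "2 \<le> length fs") (simp_all add: r hl)
qed


lemma set_take_img: "n \<le> length xs \<Longrightarrow> set (take n xs) = (\<lambda>j. xs ! j) ` {..<n}"
proof
  assume n: "n \<le> length xs"
  show "set (take n xs) \<subseteq> (\<lambda>j. xs ! j) ` {..<n}"
  proof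
    fix x assume "x \<in> set (take n xs)"
    then obtain i where "i < length (take n xs)" "take n xs ! i = x" by (auto simp: in_set_conv_nth)
    then show "x \<in> (\<lambda>j. xs ! j) ` {..<n}" by auto
  qed
  show "(\<lambda>j. xs ! j) ` {..<n} \<subseteq> set (take n xs)"
  proof
    fix x assume "x \<in> (\<lambda>j. xs ! j) ` {..<n}"
    then obtain i where i: "i < n" "x = xs ! i" by auto
    then have "take n xs ! i = x" by simp
    moreover have "i < length (take n xs)" using i n by simp
    ultimately show "x \<in> set (take n xs)" by (metis nth_mem)
  qed
qed

lemma take_stk:
  assumes so: "stacking_order X Fs" and pu: "pure X d"
  shows "1 \<le> n \<Longrightarrow> n \<le> length Fs \<Longrightarrow> stk d (take n Fs)"
proof (induction n)
  case 0 then show ?case by simp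
next
  case (Suc n)
  have nl: "n < length Fs" using Suc by simp
  have "Fs ! n \<in> facets X" using so nl by (auto simp: stacking_order_def)
  then have cardn: "card (Fs ! n) = Suc d" using pu by (simp add: pure_def)
  have t: "take (Suc n) Fs = take n Fs @ [Fs ! n]" using nl by (simp add: take_Suc_conv_app_nth)
  show ?case
  proof (cases "n = 0")
    case True
    then show ?thesis using t cardn stk.one by simp
  next
    case False
    then have nn: "1 \<le> n \<and> n < length Fs" using nl by simp
    have A: "\<forall>p. 1 \<le> p \<and> p < length Fs \<longrightarrow>
        (\<exists>v. (Fs ! p) - (\<Union>j<p. Fs ! j) = {v} \<and> (\<exists>j<p. (Fs ! p) - {v} \<subseteq> Fs ! j))"
      using so unfolding stacking_order_def by (elim conjE)
    from mp[OF spec[OF A, of n] nn] obtain v j where v: "Fs ! n - (\<Union>j<n. Fs ! j) = {v}" and j: "j < n" "Fs ! n - {v} \<subseteq> Fs ! j"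
      by (elim exE conjE) (rule that; assumption)
    have U: "\<Union>(set (take n Fs)) = (\<Union>j<n. Fs ! j)"
    proof -
      have "set (take n Fs) = (\<lambda>j. Fs ! j) ` {..<n}" using nl by (simp add: set_take_img)
      then show ?thesis by simp
    qed
    have vF: "v \<in> Fs ! n" "v \<notin> \<Union>(set (take n Fs))" using v U by blast+
    have G: "Fs ! j \<in> set (take n Fs)" using j nl set_take_img[of n Fs] by auto
    have "stk d (take n Fs)" using Suc.IH False nl by simp
    then have "stk d (take n Fs @ [Fs ! n])" by (rule stk.snoc[OF _ cardn vF G j(2)])
    then show ?thesis using t by simp
  qed
qed

lemma face_facets:
  assumes "finite X" "h \<in> X"
  shows "face (facets X) h"
proof -
  obtain m where "m \<in> X" "h \<subseteq> m" "\<forall>b\<in>X. m \<subseteq> b \<longrightarrow> m = b"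
    using finite_has_maximal2[OF assms] by blast
  then show ?thesis unfolding face_def facets_def by blast
qed

theorem lemma2p9:
  fixes V :: "'a set" and X :: "'a set set" and d :: nat and h k :: "'a set"
  assumes "simplicial_complex V X"
    and "stacked X d"
    and "h \<in> X" and "k \<in> X"
    and "\<not> (\<exists>c. codim_one_face X d c \<and> h \<union> k \<subseteq> c)"
  shows "\<exists>!fs. path_between X d h k fs"
proof -
  obtain Fs where so: "stacking_order X Fs" and pu: "pure X d"
    using assms(2) by (auto simp: stacked_def)
  have fin: "finite X"
  proof -
    have "X \<subseteq> Pow V" using assms(1) by (auto simp: simplicial_complex_def)
    moreover have "finite V" using assms(1) by (simp add: simplicial_complex_def)
    ultimately show ?thesis using finite_subset by blast
  qed
  have fX: "facets X = set Fs" using so by (simp add: stacking_order_def)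
  have "Fs \<noteq> []" using so by (simp add: stacking_order_def)
  then have st: "stk d Fs" using take_stk[OF so pu, of "length Fs"] by (simp add: Suc_le_eq)
  have fh: "face (set Fs) h" using face_facets[OF fin assms(3)] fX by simp
  have fk: "face (set Fs) k" using face_facets[OF fin assms(4)] fX by simp
  have nc: "\<not> (\<exists>c. ridge d (set Fs) c \<and> h \<union> k \<subseteq> c)"
  proof
    assume "\<exists>c. ridge d (set Fs) c \<and> h \<union> k \<subseteq> c"
    then obtain c g where c: "card c = d" "g \<in> facets X" "c \<subseteq> g" "h \<union> k \<subseteq> c"
      using fX by (auto simp: ridge_def)
    then have "g \<in> X" by (simp add: facets_def)
    then have "c \<in> X" using assms(1) c by (auto simp: simplicial_complex_def)
    then have "codim_one_face X d c" using c by (simp add: codim_one_face_def)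
    then show False using assms(5) c by blast
  qed
  have "\<exists>!xs. pb d (set Fs) h k xs" using stk_main[OF st fh fk nc] .
  then show ?thesis unfolding pb_eq fX .
qed

end
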